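(* Let $\mathcal{G}=(\mathcal{V},\mathcal{E},\rho)$ be a rooted weighted directed graph with edge weights $w_{ij}$ and set of trees $\mathcal{D}$. Let $r:\mathcal{D}\to\mathbb{R}^R$ and $s:\mathcal{D}\to\mathbb{R}^S$ be additively decomposable, $r(d)=\sum_{(i\to j)\in d}r_{ij}$ and $s(d)=\sum_{(i\to j)\in d}s_{ij}$ with $r_{ij}\in\mathbb{R}^R$, $s_{ij}\in\mathbb{R}^S$, where the $r_{ij}$ do not depend on the edge weights $w$. Let $t:\mathcal{D}\to\mathbb{R}^{R\times S}$ be $t(d)=r(d)\,s(d)^\top$ and $\bar{t}=\sum_{d\in\mathcal{D}}w(d)\,t(d)$. Then, with $\bar{r}=\sum_{d\in\mathcal{D}}w(d)\,r(d)$ regarded as a function of the edge weights, $$\bar{t}=\sum_{(i\to j)\in\mathcal{E}}\frac{\partial\bar{r}}{\partial w_{ij}}\,w_{ij}\,s_{ij}^\top,$$ and also $$\bar{t}=\sum_{(i\to j)\in\mathcal{E}}\Big(\bar{w}_{ij}\,r_{ij}\,s_{ij}^\top+\sum_{(k\to l)\in\mathcal{E}}\bar{w}_{ij,kl}\,r_{ij}\,s_{kl}^\top\Big).$$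
   Context: A rooted weighted directed graph $\mathcal{G}=(\mathcal{V},\mathcal{E},\rho)$ has node set $\mathcal{V}=\{1,\dots,N\}\cup\{\rho\}$ with designated root $\rho$; $\mathcal{E}$ is a set of edges $(i\to j)$ between distinct nodes, at most one edge per ordered pair, each carrying a weight $w_{ij}\in\mathbb{R}$; the root has no incoming edges. A tree $d$ of $\mathcal{G}$ is a set of $N$ edges containing no cycle, such that every non-root node has exactly one incoming edge and $\rho$ has at least one outgoing edge. $\mathcal{D}$ denotes the set of all trees (assumed nonempty). The weight of a tree is $w(d)=\prod_{(i\to j)\in d}w_{ij}$. For an edge $(i\to j)$, $\bar{w}_{ij}=\sum_{d\in\mathcal{D}:(i\to j)\in d}w(d)$. For distinct edges $(i\to j)\neq(k\to l)$, $\bar{w}_{ij,kl}=\sum_{d\in\mathcal{D}:(i\to j)\in d,(k\to l)\in d}w(d)$, and by convention $\bar{w}_{ij,ij}=0$. *)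

theory Defs
  imports "HOL-Analysis.Analysis"
begin

definition is_tree :: "'v set \<Rightarrow> ('v \<times> 'v) set \<Rightarrow> 'v \<Rightarrow> ('v \<times> 'v) set \<Rightarrow> bool" where
  "is_tree V E \<rho> d \<longleftrightarrow>
     d \<subseteq> E \<and> card d = card V - 1 \<and> acyclic d \<and>
     (\<forall>j \<in> V - {\<rho>}. \<exists>!i. (i, j) \<in> d) \<and>
     (\<exists>j. (\<rho>, j) \<in> d)"

definition trees :: "'v set \<Rightarrow> ('v \<times> 'v) set \<Rightarrow> 'v \<Rightarrow> ('v \<times> 'v) set set" where
  "trees V E \<rho> = {d. is_tree V E \<rho> d}"

definition tree_weight :: "('v \<times> 'v \<Rightarrow> real) \<Rightarrow> ('v \<times> 'v) set \<Rightarrow> real" where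
  "tree_weight w d = (\<Prod>e\<in>d. w e)"

definition additive :: "('v \<times> 'v \<Rightarrow> 'a::comm_monoid_add) \<Rightarrow> ('v \<times> 'v) set \<Rightarrow> 'a" where
  "additive f d = (\<Sum>e\<in>d. f e)"

definition outer :: "real ^ 'R \<Rightarrow> real ^ 'S \<Rightarrow> real ^ 'S ^ 'R" where
  "outer x y = (\<chi> a b. x $ a * y $ b)"

definition wsum :: "'v set \<Rightarrow> ('v \<times> 'v) set \<Rightarrow> 'v \<Rightarrow> ('v \<times> 'v \<Rightarrow> real)
      \<Rightarrow> (('v \<times> 'v) set \<Rightarrow> 'a::real_vector) \<Rightarrow> 'a" where
  "wsum V E \<rho> w f = (\<Sum>d\<in>trees V E \<rho>. tree_weight w d *\<^sub>R f d)"

definition wbar1 :: "'v set \<Rightarrow> ('v \<times> 'v) set \<Rightarrow> 'v \<Rightarrow> ('v \<times> 'v \<Rightarrow> real) \<Rightarrow> 'v \<times> 'v \<Rightarrow> real" where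
  "wbar1 V E \<rho> w e = (\<Sum>d\<in>{d \<in> trees V E \<rho>. e \<in> d}. tree_weight w d)"

definition wbar2 :: "'v set \<Rightarrow> ('v \<times> 'v) set \<Rightarrow> 'v \<Rightarrow> ('v \<times> 'v \<Rightarrow> real)
      \<Rightarrow> 'v \<times> 'v \<Rightarrow> 'v \<times> 'v \<Rightarrow> real" where
  "wbar2 V E \<rho> w e f =
     (if e = f then 0 else (\<Sum>d\<in>{d \<in> trees V E \<rho>. e \<in> d \<and> f \<in> d}. tree_weight w d))"

end

theory Submission
  imports Defs
begin

lemma outer_sum_left: "outer (\<Sum>i\<in>A. f i) y = (\<Sum>i\<in>A. outer (f i) y)"
  by (simp add: outer_def vec_eq_iff sum_distrib_right)

lemma outer_sum_right: "outer x (\<Sum>i\<in>A. f i) = (\<Sum>i\<in>A. outer x (f i))"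
  by (simp add: outer_def vec_eq_iff sum_distrib_left)

lemma outer_scaleR_left: "outer (c *\<^sub>R x) y = c *\<^sub>R outer x y"
  by (simp add: outer_def vec_eq_iff)

lemma outer_zero_left: "outer 0 y = 0"
  by (simp add: outer_def vec_eq_iff)

lemma sum_if_sub:
  fixes g :: "'a \<Rightarrow> 'b::comm_monoid_add"
  assumes "finite E" "d \<subseteq> E"
  shows "(\<Sum>e\<in>E. if e \<in> d then g e else 0) = (\<Sum>e\<in>d. g e)"
proof -
  have "(\<Sum>e\<in>E. if e \<in> d then g e else 0) = (\<Sum>e\<in>E \<inter> d. g e)"
    using assms(1) by (simp add: sum.inter_restrict)
  also have "E \<inter> d = d" using assms(2) by blast
  finally show ?thesis .
qed

theorem proposition7:
  fixes V :: "'v set" and E :: "('v \<times> 'v) set" and \<rho> :: 'v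
    and w :: "'v \<times> 'v \<Rightarrow> real"
    and r :: "'v \<times> 'v \<Rightarrow> real ^ 'R" and s :: "'v \<times> 'v \<Rightarrow> real ^ 'S"
  assumes "finite V" and "\<rho> \<in> V" and "E \<subseteq> V \<times> V"
    and "\<forall>(i, j) \<in> E. i \<noteq> j"
    and "\<forall>i. (i, \<rho>) \<notin> E"
    and "trees V E \<rho> \<noteq> {}"
  shows "wsum V E \<rho> w (\<lambda>d. outer (additive r d) (additive s d))
           = (\<Sum>e\<in>E. outer (w e *\<^sub>R vector_derivative
                   (\<lambda>x. wsum V E \<rho> (w(e := x)) (additive r)) (at (w e))) (s e)) \<and>
         wsum V E \<rho> w (\<lambda>d. outer (additive r d) (additive s d))
           = (\<Sum>e\<in>E. wbar1 V E \<rho> w e *\<^sub>R outer (r e) (s e)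
                 + (\<Sum>f\<in>E. wbar2 V E \<rho> w e f *\<^sub>R outer (r e) (s f)))"
proof -
  define T where "T = trees V E \<rho>"
  have finE: "finite E" using assms(1,3) finite_subset by blast
  have sub: "d \<subseteq> E" if "d \<in> T" for d
    using that by (simp add: T_def trees_def is_tree_def)
  have finT: "finite T"
    using sub finE by (metis Pow_iff finite_Pow_iff finite_subset subsetI)
  have find: "finite d" if "d \<in> T" for d using sub[OF that] finE finite_subset by blast
  define R where "R d = additive r d" for d
  define tw where "tw d = tree_weight w d" for d
  define c where "c e d = (\<Prod>e'\<in>d - {e}. w e')" for e d
  have twc: "tw d = w e * c e d" if "d \<in> T" "e \<in> d" for d e
    using find[OF that(1)] that(2) by (simp add: tw_def tree_weight_def c_def prod.remove)
  have deriv: "vector_derivative (\<lambda>x. wsum V E \<rho> (w(e := x)) (additive r)) (at (w e))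
      = (\<Sum>d\<in>T. if e \<in> d then c e d *\<^sub>R R d else 0)" for e
  proof -
    define A where "A = (\<Sum>d\<in>T. if e \<in> d then 0 else tw d *\<^sub>R R d)"
    define B where "B = (\<Sum>d\<in>T. if e \<in> d then c e d *\<^sub>R R d else 0)"
    have eq: "wsum V E \<rho> (w(e := x)) (additive r) = A + x *\<^sub>R B" for x
    proof -
      have "tree_weight (w(e := x)) d *\<^sub>R R d =
          (if e \<in> d then 0 else tw d *\<^sub>R R d) + x *\<^sub>R (if e \<in> d then c e d *\<^sub>R R d else 0)"
        if "d \<in> T" for d
      proof (cases "e \<in> d")
        case True
        have "tree_weight (w(e := x)) d = x * c e d"
          using find[OF that] True
        proof -
          have "(\<Prod>e'\<in>d - {e}. (w(e := x)) e') = c e d"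
            unfolding c_def by (intro prod.cong) auto
          then show ?thesis using find[OF that] True
            by (simp add: tree_weight_def prod.remove[of d e])
        qed
        then show ?thesis using True by simp
      next
        case False
        have "tree_weight (w(e := x)) d = tw d"
          unfolding tree_weight_def tw_def using False
          by (intro prod.cong) auto
        then show ?thesis using False by simp
      qed
      note hd = this
      have "wsum V E \<rho> (w(e := x)) (additive r) = (\<Sum>d\<in>T.
          (if e \<in> d then 0 else tw d *\<^sub>R R d) + x *\<^sub>R (if e \<in> d then c e d *\<^sub>R R d else 0))"
        unfolding wsum_def T_def[symmetric] R_def[symmetric] by (rule sum.cong[OF refl]) (rule hd)
      also have "\<dots> = A + x *\<^sub>R B"
        by (simp add: A_def B_def sum.distrib scaleR_sum_right)
      finally show ?thesis .
    qed
    have "((\<lambda>x. A + x *\<^sub>R B) has_vector_derivative B) (at (w e))"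
      by (auto intro!: derivative_eq_intros)
    then have "vector_derivative (\<lambda>x. A + x *\<^sub>R B) (at (w e)) = B"
      by (rule vector_derivative_at)
    then show ?thesis using eq B_def by simp
  qed
  have LHS: "wsum V E \<rho> w (\<lambda>d. outer (additive r d) (additive s d))
     = (\<Sum>d\<in>T. tw d *\<^sub>R (\<Sum>e\<in>d. \<Sum>f\<in>d. outer (r e) (s f)))"
    unfolding wsum_def T_def[symmetric] tw_def additive_def
    by (simp add: outer_sum_left outer_sum_right) (intro sum.cong refl arg_cong[where f = "\<lambda>x. _ *\<^sub>R x"] sum.swap)
  have part1: "wsum V E \<rho> w (\<lambda>d. outer (additive r d) (additive s d))
           = (\<Sum>e\<in>E. outer (w e *\<^sub>R vector_derivative
                   (\<lambda>x. wsum V E \<rho> (w(e := x)) (additive r)) (at (w e))) (s e))"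
  proof -
    have "(\<Sum>e\<in>E. outer (w e *\<^sub>R vector_derivative
                   (\<lambda>x. wsum V E \<rho> (w(e := x)) (additive r)) (at (w e))) (s e))
        = (\<Sum>e\<in>E. \<Sum>d\<in>T. if e \<in> d then tw d *\<^sub>R outer (R d) (s e) else 0)"
    proof (rule sum.cong[OF refl])
      fix e assume "e \<in> E"
      have "w e *\<^sub>R (\<Sum>d\<in>T. if e \<in> d then c e d *\<^sub>R R d else 0)
          = (\<Sum>d\<in>T. if e \<in> d then tw d *\<^sub>R R d else 0)"
        unfolding scaleR_sum_right by (rule sum.cong) (auto simp: twc)
      then show "outer (w e *\<^sub>R vector_derivative
                   (\<lambda>x. wsum V E \<rho> (w(e := x)) (additive r)) (at (w e))) (s e)
          = (\<Sum>d\<in>T. if e \<in> d then tw d *\<^sub>R outer (R d) (s e) else 0)"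
        by (simp add: deriv outer_sum_left)
          (intro sum.cong refl, simp add: outer_scaleR_left outer_zero_left)
    qed
    also have "\<dots> = (\<Sum>d\<in>T. \<Sum>e\<in>E. if e \<in> d then tw d *\<^sub>R outer (R d) (s e) else 0)"
      by (rule sum.swap)
    also have "\<dots> = (\<Sum>d\<in>T. tw d *\<^sub>R (\<Sum>e\<in>d. \<Sum>f\<in>d. outer (r e) (s f)))"
    proof (rule sum.cong[OF refl])
      fix d assume d: "d \<in> T"
      have "(\<Sum>e\<in>E. if e \<in> d then tw d *\<^sub>R outer (R d) (s e) else 0)
          = (\<Sum>e\<in>d. tw d *\<^sub>R outer (R d) (s e))"
        using sum_if_sub[OF finE sub[OF d]] .
      also have "\<dots> = tw d *\<^sub>R (\<Sum>e\<in>d. \<Sum>f\<in>d. outer (r e) (s f))"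
        by (simp add: R_def additive_def outer_sum_left scaleR_sum_right)
          (rule sum.swap)
      finally show "(\<Sum>e\<in>E. if e \<in> d then tw d *\<^sub>R outer (R d) (s e) else 0)
          = tw d *\<^sub>R (\<Sum>e\<in>d. \<Sum>f\<in>d. outer (r e) (s f))" .
    qed
    finally show ?thesis using LHS by simp
  qed
  have part2: "wsum V E \<rho> w (\<lambda>d. outer (additive r d) (additive s d))
           = (\<Sum>e\<in>E. wbar1 V E \<rho> w e *\<^sub>R outer (r e) (s e)
                 + (\<Sum>f\<in>E. wbar2 V E \<rho> w e f *\<^sub>R outer (r e) (s f)))"
  proof -
    have w1: "wbar1 V E \<rho> w e *\<^sub>R X = (\<Sum>d\<in>T. if e \<in> d then tw d *\<^sub>R X else 0)"
      for e and X :: "real ^'S^'R"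
      unfolding wbar1_def T_def[symmetric] tw_def scaleR_sum_left
      using finT by (simp add: sum.inter_filter)
    have w2: "wbar2 V E \<rho> w e f *\<^sub>R X
        = (\<Sum>d\<in>T. if e \<in> d \<and> f \<in> d \<and> f \<noteq> e then tw d *\<^sub>R X else 0)"
      for e f and X :: "real ^'S^'R"
      unfolding wbar2_def T_def[symmetric] tw_def
      using finT by (auto simp: scaleR_sum_left sum.inter_filter intro!: sum.cong)
    have "(\<Sum>e\<in>E. wbar1 V E \<rho> w e *\<^sub>R outer (r e) (s e)
                 + (\<Sum>f\<in>E. wbar2 V E \<rho> w e f *\<^sub>R outer (r e) (s f)))
       = (\<Sum>e\<in>E. (\<Sum>d\<in>T. if e \<in> d then tw d *\<^sub>R outer (r e) (s e) else 0)
          + (\<Sum>f\<in>E. \<Sum>d\<in>T. if e \<in> d \<and> f \<in> d \<and> f \<noteq> e then tw d *\<^sub>R outer (r e) (s f) else 0))"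
      by (simp add: w1 w2)
    also have "\<dots> = (\<Sum>d\<in>T. \<Sum>e\<in>E. (if e \<in> d then tw d *\<^sub>R outer (r e) (s e) else 0)
          + (\<Sum>f\<in>E. if e \<in> d \<and> f \<in> d \<and> f \<noteq> e then tw d *\<^sub>R outer (r e) (s f) else 0))"
      by (simp add: sum.distrib sum.swap[of _ E T] sum.swap[of _ E T])
    also have "\<dots> = (\<Sum>d\<in>T. tw d *\<^sub>R (\<Sum>e\<in>d. \<Sum>f\<in>d. outer (r e) (s f)))"
    proof (rule sum.cong[OF refl])
      fix d assume d: "d \<in> T"
      have "(\<Sum>e\<in>E. (if e \<in> d then tw d *\<^sub>R outer (r e) (s e) else 0)
          + (\<Sum>f\<in>E. if e \<in> d \<and> f \<in> d \<and> f \<noteq> e then tw d *\<^sub>R outer (r e) (s f) else 0))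
        = (\<Sum>e\<in>E. if e \<in> d then tw d *\<^sub>R (\<Sum>f\<in>d. outer (r e) (s f)) else 0)"
      proof (rule sum.cong[OF refl])
        fix e assume "e \<in> E"
        show "(if e \<in> d then tw d *\<^sub>R outer (r e) (s e) else 0)
          + (\<Sum>f\<in>E. if e \<in> d \<and> f \<in> d \<and> f \<noteq> e then tw d *\<^sub>R outer (r e) (s f) else 0)
          = (if e \<in> d then tw d *\<^sub>R (\<Sum>f\<in>d. outer (r e) (s f)) else 0)"
        proof (cases "e \<in> d")
          case True
          have "(\<Sum>f\<in>E. if e \<in> d \<and> f \<in> d \<and> f \<noteq> e then tw d *\<^sub>R outer (r e) (s f) else 0)
              = (\<Sum>f\<in>E. if f \<in> d - {e} then tw d *\<^sub>R outer (r e) (s f) else 0)"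
            using True by (intro sum.cong) auto
          also have "\<dots> = (\<Sum>f\<in>d - {e}. tw d *\<^sub>R outer (r e) (s f))"
            using sub[OF d] by (intro sum_if_sub[OF finE]) auto
          finally show ?thesis using True find[OF d]
            by (simp add: sum.remove[of d e] scaleR_sum_right scaleR_add_right)
        qed simp
      qed
      also have "\<dots> = (\<Sum>e\<in>d. tw d *\<^sub>R (\<Sum>f\<in>d. outer (r e) (s f)))"
        by (rule sum_if_sub[OF finE sub[OF d]])
      finally show "(\<Sum>e\<in>E. (if e \<in> d then tw d *\<^sub>R outer (r e) (s e) else 0)
          + (\<Sum>f\<in>E. if e \<in> d \<and> f \<in> d \<and> f \<noteq> e then tw d *\<^sub>R outer (r e) (s f) else 0))
          = tw d *\<^sub>R (\<Sum>e\<in>d. \<Sum>f\<in>d. outer (r e) (s f))"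
        by (simp add: scaleR_sum_right)
    qed
    finally show ?thesis using LHS by simp
  qed
  show ?thesis using part1 part2 by blast
qed

end
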